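(* Let $n\geq 2$ and let $X$ be any finite subset of $\mathbb{R}^n$. Then there is a polynomial function $P:\mathbb{R}^n\rightarrow \mathbb{R}$ which has a local minimum at every point of $X$ and has no critical points other than the points of $X$. *)

theory Defs
  imports "HOL-Analysis.Analysis"
begin

inductive real_poly_fun :: "(real ^ 'n \<Rightarrow> real) \<Rightarrow> bool" where
  const: "real_poly_fun (\<lambda>x. c)"
| coord: "real_poly_fun (\<lambda>x. x $ i)"
| add: "real_poly_fun p \<Longrightarrow> real_poly_fun q \<Longrightarrow> real_poly_fun (\<lambda>x. p x + q x)"
| mult: "real_poly_fun p \<Longrightarrow> real_poly_fun q \<Longrightarrow> real_poly_fun (\<lambda>x. p x * q x)"

definition local_min_at :: "('a::metric_space \<Rightarrow> real) \<Rightarrow> 'a \<Rightarrow> bool" where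
  "local_min_at f x \<longleftrightarrow> (\<exists>e>0. \<forall>y. dist y x < e \<longrightarrow> f x \<le> f y)"

definition critical_point :: "('a::real_normed_vector \<Rightarrow> real) \<Rightarrow> 'a \<Rightarrow> bool" where
  "critical_point f x \<longleftrightarrow> (f has_derivative (\<lambda>h. 0)) (at x)"

end

theory Submission imports Defs "HOL-Computational_Algebra.Polynomial" begin


lemma rpf_diff: "real_poly_fun p \<Longrightarrow> real_poly_fun q \<Longrightarrow> real_poly_fun (\<lambda>x. p x - q x)"
proof -
  assume "real_poly_fun p" "real_poly_fun q"
  then have "real_poly_fun (\<lambda>x. p x + (\<lambda>x. -1) x * q x)"
    by (intro real_poly_fun.add real_poly_fun.mult real_poly_fun.const)
  then show ?thesis by simp
qed

lemma rpf_sum: "finite S \<Longrightarrow> (\<And>i. i \<in> S \<Longrightarrow> real_poly_fun (f i)) \<Longrightarrow> real_poly_fun (\<lambda>x. \<Sum>i\<in>S. f i x)"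
proof (induction S rule: finite_induct)
  case empty
  then show ?case using real_poly_fun.const[of 0] by simp
next
  case (insert a S)
  then show ?case by (simp add: real_poly_fun.add)
qed

lemma rpf_poly: "real_poly_fun g \<Longrightarrow> real_poly_fun (\<lambda>x. poly p (g x))"
proof (induction p)
  case 0
  then show ?case using real_poly_fun.const[of 0] by simp
next
  case (pCons a p)
  then show ?case by (simp add: real_poly_fun.add real_poly_fun.mult real_poly_fun.const)
qed

lemma rpf_inner: "real_poly_fun (\<lambda>x::real^'n. c \<bullet> x)"
  unfolding inner_vec_def
  by (auto intro!: rpf_sum real_poly_fun.mult real_poly_fun.const real_poly_fun.coord)

lemma rpf_sq: "real_poly_fun p \<Longrightarrow> real_poly_fun (\<lambda>x. (p x)^2)"
  by (simp add: power2_eq_square real_poly_fun.mult)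

lemma poly_lin_prod_zero:
  fixes A :: "real set"
  assumes "finite A"
  shows "poly (\<Prod>a\<in>A. [:-a, 1:]) t = 0 \<longleftrightarrow> t \<in> A"
proof -
  have "poly (\<Prod>a\<in>A. [:-a, 1:]) t = (\<Prod>a\<in>A. t - a)" by (simp add: poly_prod)
  also have "\<dots> = 0 \<longleftrightarrow> (\<exists>a\<in>A. t - a = 0)" using assms by (rule prod_zero_iff)
  finally show ?thesis by auto
qed

lemma poly_lin_prod_deriv:
  fixes A :: "real set"
  assumes "finite A" "t \<in> A"
  shows "poly (pderiv (\<Prod>a\<in>A. [:-a, 1:])) t \<noteq> 0"
proof -
  have "poly (pderiv (\<Prod>a\<in>A. [:-a, 1:])) t = (\<Sum>a\<in>A. \<Prod>b\<in>A - {a}. (t - b))"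
    by (simp add: pderiv_prod poly_sum poly_prod pderiv_pCons)
  also have "\<dots> = (\<Prod>b\<in>A - {t}. (t - b))"
  proof -
    have "(\<Sum>a\<in>A. \<Prod>b\<in>A - {a}. (t - b)) = (\<Prod>b\<in>A - {t}. (t - b)) + (\<Sum>a\<in>A - {t}. \<Prod>b\<in>A - {a}. (t - b))"
      using assms by (simp add: sum.remove)
    moreover have "(\<Sum>a\<in>A - {t}. \<Prod>b\<in>A - {a}. (t - b)) = 0"
      using assms by (intro sum.neutral) (auto simp: prod_zero_iff)
    ultimately show ?thesis by simp
  qed
  also have "\<dots> \<noteq> 0" using assms by (simp add: prod_zero_iff)
  finally show ?thesis .
qed

lemma interp:
  fixes A :: "real set"
  assumes "finite A"
  shows "\<exists>r. \<forall>a\<in>A. poly r a = f a"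
  using assms
proof (induction A rule: finite_induct)
  case empty
  then show ?case by simp
next
  case (insert a A)
  then obtain r where r: "\<forall>b\<in>A. poly r b = f b" by blast
  define qA where "qA = (\<Prod>b\<in>A. [:-b, 1:])"
  have qa: "poly qA a \<noteq> 0" using insert poly_lin_prod_zero[of A a] by (simp add: qA_def)
  have qb: "\<forall>b\<in>A. poly qA b = 0" using insert poly_lin_prod_zero[of A] by (simp add: qA_def)
  define r' where "r' = r + smult ((f a - poly r a) / poly qA a) qA"
  have "\<forall>b\<in>insert a A. poly r' b = f b"
    using r qa qb by (auto simp: r'_def)
  then show ?case by blast
qed

lemma exists_sep:
  fixes D :: "(real^'n) set"
  assumes "finite D" "0 \<notin> D"
  shows "\<exists>c. c \<noteq> 0 \<and> (\<forall>d\<in>D. c \<bullet> d \<noteq> 0)"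
  using assms
proof (induction D rule: finite_induct)
  case empty
  then show ?case by (intro exI[of _ "axis undefined 1"]) (simp add: axis_eq_0_iff)
next
  case (insert d D)
  then obtain c where c: "c \<noteq> 0" "\<forall>d'\<in>D. c \<bullet> d' \<noteq> 0" by auto
  have d0: "d \<noteq> 0" using insert by auto
  show ?case
  proof (cases "c \<bullet> d = 0")
    case False
    then show ?thesis using c by auto
  next
    case True
    define B where "B = insert 0 ((\<lambda>d'. - (c \<bullet> d') / (d \<bullet> d')) ` D)"
    have "finite B" using insert by (simp add: B_def)
    then obtain e :: real where e: "e \<notin> B" using ex_new_if_finite[of B] infinite_UNIV_char_0 by blast
    have e0: "e \<noteq> 0" using e by (simp add: B_def)
    have 1: "(c + e *\<^sub>R d) \<bullet> d \<noteq> 0"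
      using True e0 d0 by (simp add: inner_add_left)
    have 2: "(c + e *\<^sub>R d) \<bullet> d' \<noteq> 0" if "d' \<in> D" for d'
    proof
      assume h: "(c + e *\<^sub>R d) \<bullet> d' = 0"
      have ne: "c \<bullet> d' \<noteq> 0" using c that by auto
      have "c \<bullet> d' + e * (d \<bullet> d') = 0" using h by (simp add: inner_add_left)
      then have "d \<bullet> d' \<noteq> 0" using ne by auto
      then have "e = - (c \<bullet> d') / (d \<bullet> d')" using \<open>c \<bullet> d' + e * (d \<bullet> d') = 0\<close>
        by (simp add: field_simps)
      then show False using e that by (simp add: B_def)
    qed
    have "c + e *\<^sub>R d \<noteq> 0" using 1 by auto
    then show ?thesis using 1 2 by auto
  qed
qed



lemma poly_comp_deriv:
  fixes p :: "real poly"
  assumes "(g has_derivative g') (at x)"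
  shows "((\<lambda>x. poly p (g x)) has_derivative (\<lambda>v. poly (pderiv p) (g x) * g' v)) (at x)"
  using has_derivative_compose[OF assms has_field_derivative_imp_has_derivative[OF poly_DERIV[of p "g x"]]]
  by simp

lemma P_deriv:
  fixes c :: "real^'n" and x :: "real^'n" and q h s :: "real poly" and r :: "'n \<Rightarrow> real poly"
  shows "((\<lambda>x. (poly q (c\<bullet>x))^2 + (poly h (c\<bullet>x) * x$i2 - poly s (c\<bullet>x))^2 + (\<Sum>j\<in>J. (x$j - poly (r j) (c\<bullet>x))^2)) has_derivative
    (\<lambda>v. 2 * poly q (c\<bullet>x) * poly (pderiv q) (c\<bullet>x) * (c\<bullet>v)
       + 2 * (poly h (c\<bullet>x) * x$i2 - poly s (c\<bullet>x)) * (poly (pderiv h) (c\<bullet>x) * (c\<bullet>v) * x$i2 + poly h (c\<bullet>x) * v$i2 - poly (pderiv s) (c\<bullet>x) * (c\<bullet>v))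
       + (\<Sum>j\<in>J. 2 * (x$j - poly (r j) (c\<bullet>x)) * (v$j - poly (pderiv (r j)) (c\<bullet>x) * (c\<bullet>v))))) (at x)"
proof -
  have dU: "((\<lambda>x. c\<bullet>x) has_derivative (\<lambda>v. c\<bullet>v)) (at x)"
    by (intro bounded_linear_imp_has_derivative bounded_linear_inner_right)
  have dC: "\<And>j. ((\<lambda>x. x$j) has_derivative (\<lambda>v. v$j)) (at x)"
    by (intro bounded_linear_imp_has_derivative bounded_linear_vec_nth)
  note dP = poly_comp_deriv[OF dU]
  show ?thesis
    apply (rule has_derivative_eq_rhs)
     apply (rule has_derivative_add has_derivative_sum has_derivative_power has_derivative_diff has_derivative_mult dP dC)+
    apply (simp add: fun_eq_iff algebra_simps)
    done
qed



theorem proposition1: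
  fixes X :: "(real ^ 'n) set"
  assumes "CARD('n) \<ge> 2"
    and "finite X"
  shows "\<exists>P. real_poly_fun P \<and> (\<forall>x\<in>X. local_min_at P x)
             \<and> (\<forall>x. critical_point P x \<longrightarrow> x \<in> X)"
proof (cases "X = {}")
  case True
  define i :: 'n where "i = undefined"
  have "real_poly_fun (\<lambda>x::real^'n. x $ i)" by (rule real_poly_fun.coord)
  moreover have "\<not> critical_point (\<lambda>x::real^'n. x $ i) x" for x
  proof
    assume "critical_point (\<lambda>x::real^'n. x $ i) x"
    then have 1: "((\<lambda>x::real^'n. x $ i) has_derivative (\<lambda>h. 0)) (at x)" by (simp add: critical_point_def)
    have 2: "((\<lambda>x::real^'n. x $ i) has_derivative (\<lambda>h. h $ i)) (at x)"
      by (intro bounded_linear_imp_has_derivative bounded_linear_vec_nth)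
    have "(\<lambda>h::real^'n. h $ i) = (\<lambda>h. 0)" using has_derivative_unique[OF 2 1] .
    then have "(axis i 1 :: real^'n) $ i = 0" by metis
    then show False by (simp add: axis_def)
  qed
  ultimately show ?thesis using True by blast
next
  case False
  define D where "D = (\<lambda>(p,q). p - q) ` {(p,q). p \<in> X \<and> q \<in> X \<and> p \<noteq> q}"
  have "finite D" unfolding D_def
    by (rule finite_imageI, rule finite_subset[of _ "X \<times> X"]) (use assms(2) in auto)
  moreover have "0 \<notin> D" by (auto simp: D_def)
  ultimately obtain c0 :: "real^'n" where c0: "c0 \<noteq> 0" "\<forall>d\<in>D. c0 \<bullet> d \<noteq> 0"
    using exists_sep by blast
  obtain i1 where i1: "c0 $ i1 \<noteq> 0" using c0(1) by (metis vec_eq_iff zero_index)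
  define c where "c = (1 / c0 $ i1) *\<^sub>R c0"
  have ci1: "c $ i1 = 1" using i1 by (simp add: c_def)
  define U where "U = (\<lambda>x::real^'n. c \<bullet> x)"
  have injU: "inj_on U X"
  proof (rule inj_onI)
    fix p q assume pq: "p \<in> X" "q \<in> X" "U p = U q"
    show "p = q"
    proof (rule ccontr)
      assume "p \<noteq> q"
      then have "p - q \<in> D" using pq by (auto simp: D_def)
      then have "c0 \<bullet> (p - q) \<noteq> 0" using c0 by auto
      moreover have "c \<bullet> (p - q) = 0" using pq(3) by (simp add: U_def inner_diff_right)
      ultimately show False using i1 by (simp add: c_def)
    qed
  qed
  obtain i2 where i2: "i2 \<noteq> i1"
  proof -
    have "\<exists>i2. i2 \<noteq> i1"
    proof (rule ccontr)
      assume "\<not> (\<exists>i2. i2 \<noteq> i1)"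
      then have u: "(UNIV :: 'n set) = {i1}" by auto
      have "CARD('n) = card {i1}" by (subst u) (rule refl)
      then show False using assms(1) by simp
    qed
    then show ?thesis using that by blast
  qed
  define A where "A = U ` X"
  have finA: "finite A" using assms(2) by (simp add: A_def)
  have A_ne: "A \<noteq> {}" using False by (simp add: A_def)
  define q where "q = (\<Prod>a\<in>A. [:-a, 1:])"
  have qzero: "poly q t = 0 \<longleftrightarrow> t \<in> A" for t
    unfolding q_def using finA by (rule poly_lin_prod_zero)
  have qsimple: "poly q t = 0 \<Longrightarrow> poly (pderiv q) t \<noteq> 0" for t
    using qzero poly_lin_prod_deriv[OF finA] by (simp add: q_def)
  define Z where "Z = {z. poly (pderiv q) z = 0}"
  have "pderiv q \<noteq> 0"
  proof
    assume h: "pderiv q = 0"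
    obtain a where "a \<in> A" using A_ne by auto
    then show False using qsimple[of a] qzero[of a] h by simp
  qed
  then have finZ: "finite Z" unfolding Z_def by (rule poly_roots_finite)
  have qZ: "z \<in> Z \<Longrightarrow> poly q z \<noteq> 0" for z using qsimple by (auto simp: Z_def)
  define h where "h = pderiv q * pderiv q"
  have hZ: "poly h t = 0 \<longleftrightarrow> t \<in> Z" for t by (simp add: h_def Z_def)
  have h'Z: "t \<in> Z \<Longrightarrow> poly (pderiv h) t = 0" for t by (simp add: h_def Z_def pderiv_mult)
  define pt where "pt = inv_into X U"
  have pt: "p \<in> X \<Longrightarrow> pt (U p) = p" for p using injU by (simp add: pt_def)
  obtain s0 where s0: "\<forall>a\<in>A. poly s0 a = poly h a * (pt a) $ i2"
    using interp[OF finA, of "\<lambda>a. poly h a * (pt a) $ i2"] by blast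
  have "\<forall>j. \<exists>r. \<forall>a\<in>A. poly r a = (pt a) $ j"
  proof
    fix j show "\<exists>r. \<forall>a\<in>A. poly r a = (pt a) $ j" using interp[OF finA, of "\<lambda>a. (pt a) $ j"] .
  qed
  then obtain r where r: "\<And>j. \<forall>a\<in>A. poly (r j) a = (pt a) $ j" by metis
  obtain d :: real where d: "d \<notin> Z" using ex_new_if_finite[OF infinite_UNIV_char_0 finZ] by blast
  define B where "B = (\<lambda>z. - poly s0 z / (poly q z * (z - d))) ` Z \<union> (\<lambda>z. - poly (pderiv s0) z / poly q z) ` Z"
  have "finite B" using finZ by (simp add: B_def)
  then obtain l :: real where l: "l \<notin> B" using ex_new_if_finite[OF infinite_UNIV_char_0] by blast
  define s where "s = s0 + smult l (q * [:-d, 1:])"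
  have sA: "a \<in> A \<Longrightarrow> poly s a = poly s0 a" for a using qzero by (simp add: s_def)
  have sZ: "poly s z \<noteq> 0" if "z \<in> Z" for z
  proof
    assume "poly s z = 0"
    then have e: "poly s0 z + l * (poly q z * (z - d)) = 0" by (simp add: s_def algebra_simps)
    have "poly q z * (z - d) \<noteq> 0" using qZ[OF that] d that by auto
    then have "l = - poly s0 z / (poly q z * (z - d))" using e by (simp add: field_simps)
    then show False using l that by (auto simp: B_def)
  qed
  have s'Z: "poly (pderiv s) z \<noteq> 0" if "z \<in> Z" for z
  proof
    assume "poly (pderiv s) z = 0"
    moreover have "poly (pderiv (q * [:-d, 1:])) z = poly q z"
      using that unfolding pderiv_mult by (simp add: pderiv_pCons Z_def)
    ultimately have e: "poly (pderiv s0) z + l * poly q z = 0" by (simp add: s_def pderiv_add pderiv_smult)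
    then have "l = - poly (pderiv s0) z / poly q z" using qZ[OF that] by (simp add: field_simps)
    then show False using l that by (auto simp: B_def)
  qed
  define J where "J = UNIV - {i1, i2}"
  define P where "P = (\<lambda>x::real^'n. (poly q (c\<bullet>x))^2 + (poly h (c\<bullet>x) * x$i2 - poly s (c\<bullet>x))^2 + (\<Sum>j\<in>J. (x$j - poly (r j) (c\<bullet>x))^2))"
  have rpf: "real_poly_fun P"
    unfolding P_def
    by (intro real_poly_fun.add rpf_sq rpf_sum rpf_diff rpf_poly rpf_inner real_poly_fun.mult real_poly_fun.coord) auto
  have Pnn: "P y \<ge> 0" for y unfolding P_def by (intro add_nonneg_nonneg sum_nonneg) auto
  have P0: "P p = 0" if "p \<in> X" for p
  proof -
    have UA: "c \<bullet> p \<in> A" using that by (simp add: A_def U_def)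
    have ptp: "pt (c \<bullet> p) = p" using pt[OF that] by (simp add: U_def)
    have "poly q (c\<bullet>p) = 0" using qzero UA by simp
    moreover have "poly s (c\<bullet>p) = poly h (c\<bullet>p) * p$i2" using sA[OF UA] s0 UA ptp by simp
    moreover have "poly (r j) (c\<bullet>p) = p$j" for j using r[of j] UA ptp by simp
    ultimately show ?thesis by (simp add: P_def)
  qed
  have lm: "local_min_at P p" if "p \<in> X" for p
    unfolding local_min_at_def using P0[OF that] Pnn by (intro exI[of _ 1]) auto
  have crit: "x \<in> X" if cp: "critical_point P x" for x
  proof -
    let ?u = "c \<bullet> x"
    define Df where "Df = (\<lambda>v. 2 * poly q ?u * poly (pderiv q) ?u * (c\<bullet>v)
       + 2 * (poly h ?u * x$i2 - poly s ?u) * (poly (pderiv h) ?u * (c\<bullet>v) * x$i2 + poly h ?u * v$i2 - poly (pderiv s) ?u * (c\<bullet>v))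
       + (\<Sum>j\<in>J. 2 * (x$j - poly (r j) ?u) * (v$j - poly (pderiv (r j)) ?u * (c\<bullet>v))))"
    have dP: "(P has_derivative Df) (at x)" unfolding P_def Df_def by (rule P_deriv)
    have Dz: "Df v = 0" for v
      using has_derivative_unique[OF dP cp[unfolded critical_point_def]] by metis
    have Jn: "j \<in> J \<longleftrightarrow> j \<noteq> i1 \<and> j \<noteq> i2" for j by (auto simp: J_def)
    have finJ: "finite J" by simp
    have xj: "x$j = poly (r j) ?u" if "j \<in> J" for j
    proof -
      define v where "v = axis j 1 - c$j *\<^sub>R axis i1 (1::real)"
      have cv: "c \<bullet> v = 0" using ci1 by (simp add: v_def inner_diff_right inner_axis)
      have vi2: "v $ i2 = 0" using that i2 Jn by (auto simp: v_def axis_def)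
      have vk: "v $ k = (if k = j then 1 else 0)" if "k \<in> J" for k
        using that Jn by (simp add: v_def axis_def)
      have "Df v = (\<Sum>k\<in>J. 2 * (x$k - poly (r k) ?u) * (if k = j then 1 else 0))"
        unfolding Df_def using cv vi2 vk by (simp cong: sum.cong)
      also have "\<dots> = 2 * (x$j - poly (r j) ?u)"
        using that finJ by (simp add: if_distrib[where f="\<lambda>t. _ * t"] sum.delta cong: if_cong)
      finally show ?thesis using Dz[of v] by simp
    qed
    have T: "poly h ?u * (poly h ?u * x$i2 - poly s ?u) = 0"
    proof -
      define v where "v = axis i2 1 - c$i2 *\<^sub>R axis i1 (1::real)"
      have cv: "c \<bullet> v = 0" using ci1 by (simp add: v_def inner_diff_right inner_axis)
      have vi2: "v $ i2 = 1" using i2 by (simp add: v_def axis_def)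
      have "Df v = 2 * (poly h ?u * x$i2 - poly s ?u) * poly h ?u"
        unfolding Df_def using cv vi2 xj by simp
      then show ?thesis using Dz[of v] by auto
    qed
    have E: "poly q ?u * poly (pderiv q) ?u + (poly h ?u * x$i2 - poly s ?u) * (poly (pderiv h) ?u * x$i2 - poly (pderiv s) ?u) = 0"
    proof -
      define v where "v = axis i1 (1::real)"
      have cv: "c \<bullet> v = 1" using ci1 by (simp add: v_def inner_axis)
      have vi2: "v $ i2 = 0" using i2 by (simp add: v_def axis_def)
      have "Df v = 2 * poly q ?u * poly (pderiv q) ?u + 2 * (poly h ?u * x$i2 - poly s ?u) * (poly (pderiv h) ?u * x$i2 - poly (pderiv s) ?u)"
        unfolding Df_def using cv vi2 xj by simp
      then show ?thesis using Dz[of v] by (simp add: algebra_simps)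
    qed
    show ?thesis
    proof (cases "?u \<in> Z")
      case True
      then have "poly h ?u = 0" "poly (pderiv h) ?u = 0" "poly (pderiv q) ?u = 0"
        using hZ h'Z by (auto simp: Z_def)
      then have "poly s ?u * poly (pderiv s) ?u = 0" using E by simp
      then show ?thesis using sZ[OF True] s'Z[OF True] by simp
    next
      case False
      then have hne: "poly h ?u \<noteq> 0" using hZ by simp
      then have T0: "poly h ?u * x$i2 = poly s ?u" using T by simp
      then have "poly q ?u = 0" using E False by (simp add: Z_def)
      then have "?u \<in> A" using qzero by simp
      then obtain p where p: "p \<in> X" "c \<bullet> p = ?u" by (auto simp: A_def U_def)
      have UA: "c \<bullet> p \<in> A" using p(1) by (simp add: A_def U_def)
      have ptp: "pt (c \<bullet> p) = p" using pt[OF p(1)] by (simp add: U_def)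
      have c1: "x $ j = p $ j" if "j \<in> J" for j using xj[OF that] r[of j] UA ptp p by simp
      have c2: "x $ i2 = p $ i2"
      proof -
        have "poly s ?u = poly h ?u * p$i2" using sA[OF UA] s0 UA ptp p by simp
        then show ?thesis using T0 hne by simp
      qed
      have eqk: "(x - p) $ k = 0" if "k \<noteq> i1" for k
        using c1 c2 Jn that by (cases "k = i2") auto
      then have eqk: "x $ k = p $ k" if "k \<noteq> i1" for k using that by simp
      have "c \<bullet> (x - p) = 0" using p by (simp add: inner_diff_right)
      moreover have "c \<bullet> (x - p) = (x - p) $ i1"
      proof -
        have "c \<bullet> (x - p) = (\<Sum>k\<in>UNIV. c$k * (x - p)$k)" by (simp add: inner_vec_def)
        also have "\<dots> = c$i1 * (x-p)$i1"
        proof -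
          have "(\<Sum>k\<in>UNIV - {i1}. c$k * (x - p)$k) = 0" using eqk by (intro sum.neutral) auto
          then show ?thesis by (simp add: sum.remove[of UNIV i1])
        qed
        finally show ?thesis using ci1 by simp
      qed
      ultimately have "(x - p) $ i1 = 0" by simp
      then have "x = p"
      proof -
        assume h1: "(x - p) $ i1 = 0"
        show "x = p"
        proof (rule iffD2[OF vec_eq_iff], rule allI)
          fix k show "x $ k = p $ k" using eqk h1 by (cases "k = i1") auto
        qed
      qed
      then show ?thesis using p by simp
    qed
  qed
  show ?thesis using rpf lm crit by blast
qed


end
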